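(* Consider the scaled induction machine model with state $x=(\tilde i_{s\alpha},\tilde i_{s\beta},\tilde\psi_{r\alpha},\tilde\psi_{r\beta},\omega_e,T_r)^T$, input $\mathcal{V}_s\in\mathbb{R}^2$ (differentiable in time): $$\dot{\tilde{\mathcal{I}}}_s=\mathcal{V}_s+a\tilde{\mathcal{I}}_s+\gamma\tilde\Psi_r,\quad \dot{\tilde\Psi}_r=-\gamma\tilde\Psi_r-(a-b)\tilde{\mathcal{I}}_s,\quad \dot\omega_e=\tfrac{c}{J}\tilde{\mathcal{I}}_s^T\mathbf{J}_2\tilde\Psi_r-\tfrac{p}{J}T_r,\quad \dot T_r=0,$$ with $\gamma=\frac{1}{\tau_r}\mathbf{I}_2-\omega_e\mathbf{J}_2$, $\mathbf{J}_2=\begin{bmatrix}0&-1\\1&0\end{bmatrix}$, and output $y=\tilde{\mathcal{I}}_s$. Let $\mathcal{O}(x)$ be the $6\times6$ matrix whose rows are the gradients with respect to $x$ (columns in the order above) of $\tilde i_{s\alpha},\tilde i_{s\beta},\mathcal{L}_f\tilde i_{s\alpha},\mathcal{L}_f\tilde i_{s\beta},\mathcal{L}_f^2\tilde i_{s\alpha},\mathcal{L}_f^2\tilde i_{s\beta}$. Writing $\Psi_r=(\psi_{r\alpha},\psi_{r\beta})^T=\tilde\Psi_r/k_r$, one has $$\det\mathcal{O}(x)=\frac{p}{J}\frac{k_r^2}{\tau_r^2}\Big[\tau_r\dot\omega_e\big(\psi_{r\alpha}^2+\psi_{r\beta}^2\big)-\big(1+\tau_r^2\omega_e^2\big)\Big(\dot\psi_{r\alpha}\psi_{r\beta}-\dot\psi_{r\beta}\psi_{r\alpha}\Big)\Big],$$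 where $\dot\omega_e,\dot\psi_{r\alpha},\dot\psi_{r\beta}$ denote the right-hand sides of the model (functions of the state).
   Context: $a=-R_\sigma/L_\sigma$, $b=-R_s/L_\sigma$, $c=p^2/L_\sigma$, $k_r=M/L_r$, $\tau_r=L_r/R_r$, $L_\sigma=\sigma L_s$, $\sigma=1-M^2/(L_sL_r)$, $R_\sigma=R_s+k_r^2R_r$; $\tilde{\mathcal{I}}_s=L_\sigma\mathcal{I}_s$, $\tilde\Psi_r=k_r\Psi_r$; $p,J,\tau_r,k_r>0$. Lie derivatives: $\mathcal{L}_f^0h=h$, $\mathcal{L}_f^{k+1}h$ is the time derivative of $\mathcal{L}_f^kh$ along the model (terms involving $\dot{\mathcal{V}}_s$ do not depend on $x$). *)

theory Defs
  imports "HOL-Analysis.Analysis"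
begin

definition sigma_im :: "real \<Rightarrow> real \<Rightarrow> real \<Rightarrow> real" where
  "sigma_im Ls Lr M = 1 - M^2 / (Ls * Lr)"
definition Lsig :: "real \<Rightarrow> real \<Rightarrow> real \<Rightarrow> real" where
  "Lsig Ls Lr M = sigma_im Ls Lr M * Ls"
definition k_r :: "real \<Rightarrow> real \<Rightarrow> real" where
  "k_r Lr M = M / Lr"
definition tau_r :: "real \<Rightarrow> real \<Rightarrow> real" where
  "tau_r Rr Lr = Lr / Rr"
definition Rsig :: "real \<Rightarrow> real \<Rightarrow> real \<Rightarrow> real \<Rightarrow> real" where
  "Rsig Rs Rr Lr M = Rs + (k_r Lr M)^2 * Rr"
definition a_im :: "real \<Rightarrow> real \<Rightarrow> real \<Rightarrow> real \<Rightarrow> real \<Rightarrow> real" where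
  "a_im Rs Rr Ls Lr M = - Rsig Rs Rr Lr M / Lsig Ls Lr M"
definition b_im :: "real \<Rightarrow> real \<Rightarrow> real \<Rightarrow> real \<Rightarrow> real" where
  "b_im Rs Ls Lr M = - Rs / Lsig Ls Lr M"
definition c_im :: "real \<Rightarrow> real \<Rightarrow> real \<Rightarrow> real \<Rightarrow> real" where
  "c_im p Ls Lr M = p^2 / Lsig Ls Lr M"

text \<open>State x = (i_sa, i_sb, psi_ra, psi_rb, omega_e, T_r) stored as x$1,...,x$6
  (note that in the index type 6 the numeral 6 is the element 0).
  V is the input voltage vector (V$1, V$2).\<close>

definition im_field ::
  "real \<Rightarrow> real \<Rightarrow> real \<Rightarrow> real \<Rightarrow> real \<Rightarrow> real \<Rightarrow> real \<Rightarrow> real^6 \<Rightarrow> real^2 \<Rightarrow> real^6" where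
  "im_field Rs Rr Ls Lr M p J x V =
    (let a = a_im Rs Rr Ls Lr M; b = b_im Rs Ls Lr M; c = c_im p Ls Lr M;
         tr = tau_r Rr Lr;
         i1 = x$1; i2 = x$2; f1 = x$3; f2 = x$4; w = x$5; T = x$6
     in (\<chi> k. if k = 1 then V$1 + a * i1 + (1/tr) * f1 + w * f2
         else if k = 2 then V$2 + a * i2 + (1/tr) * f2 - w * f1
         else if k = 3 then - ((1/tr) * f1 + w * f2) - (a - b) * i1
         else if k = 4 then - ((1/tr) * f2 - w * f1) - (a - b) * i2
         else if k = 5 then (c / J) * (i1 * (- f2) + i2 * f1) - (p / J) * T
         else 0))"

text \<open>Functions h x u of the state x and of the jet u of the input
  (u 0 = V_s, u 1 = dV_s/dt, ...).\<close>

definition partial_x :: "(real^6 \<Rightarrow> (nat \<Rightarrow> real^2) \<Rightarrow> real) \<Rightarrow> 6 \<Rightarrow> real^6 \<Rightarrow> (nat \<Rightarrow> real^2) \<Rightarrow> real" where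
  "partial_x h j x u = deriv (\<lambda>t. h (x + t *\<^sub>R axis j 1) u) 0"

definition partial_u :: "(real^6 \<Rightarrow> (nat \<Rightarrow> real^2) \<Rightarrow> real) \<Rightarrow> nat \<Rightarrow> 2 \<Rightarrow> real^6 \<Rightarrow> (nat \<Rightarrow> real^2) \<Rightarrow> real" where
  "partial_u h k i x u = deriv (\<lambda>t. h x (u(k := u k + t *\<^sub>R axis i 1))) 0"

text \<open>Time derivative along the model of a function depending on x and on u 0, ..., u (m-1).\<close>
definition lie_step ::
  "(real^6 \<Rightarrow> real^2 \<Rightarrow> real^6) \<Rightarrow> nat \<Rightarrow> (real^6 \<Rightarrow> (nat \<Rightarrow> real^2) \<Rightarrow> real) \<Rightarrow> real^6 \<Rightarrow> (nat \<Rightarrow> real^2) \<Rightarrow> real" where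
  "lie_step F m h x u =
     (\<Sum>j\<in>UNIV. partial_x h j x u * F x (u 0) $ j)
   + (\<Sum>k<m. \<Sum>i\<in>UNIV. partial_u h k i x u * u (Suc k) $ i)"

fun lie_iter ::
  "(real^6 \<Rightarrow> real^2 \<Rightarrow> real^6) \<Rightarrow> nat \<Rightarrow> (real^6 \<Rightarrow> (nat \<Rightarrow> real^2) \<Rightarrow> real) \<Rightarrow> real^6 \<Rightarrow> (nat \<Rightarrow> real^2) \<Rightarrow> real" where
  "lie_iter F 0 h = h"
| "lie_iter F (Suc n) h = lie_step F n (lie_iter F n h)"

definition out_im :: "6 \<Rightarrow> real^6 \<Rightarrow> (nat \<Rightarrow> real^2) \<Rightarrow> real" where
  "out_im i x u = x $ i"

definition obs_matrix ::
  "(real^6 \<Rightarrow> real^2 \<Rightarrow> real^6) \<Rightarrow> real^6 \<Rightarrow> (nat \<Rightarrow> real^2) \<Rightarrow> real^6^6" where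
  "obs_matrix F x u =
    (\<chi> r col.
       let (k, i) = (if r = 1 then (0::nat, 1::6) else if r = 2 then (0, 2)
                     else if r = 3 then (1, 1) else if r = 4 then (1, 2)
                     else if r = 5 then (2, 1) else (2, 2))
       in partial_x (lie_iter F k (out_im i)) col x u)"

end

theory Submission imports Defs begin
lemma exhaust_6: fixes x :: 6 shows "x = 1 \<or> x = 2 \<or> x = 3 \<or> x = 4 \<or> x = 5 \<or> x = 6"
proof (induct x)
  case (of_int z)
  then have "z = 0 \<or> z = 1 \<or> z = 2 \<or> z = 3 \<or> z = 4 \<or> z = 5" by fastforce
  then show ?case by auto
qed
lemma UNIV_6: "(UNIV::6 set) = {1,2,3,4,5,6}" using exhaust_6 by auto

lemma det6_special:
  fixes A :: "real^6^6"
  assumes "\<And>j. A$1$j = (if j = 1 then 1 else 0)" "\<And>j. A$2$j = (if j = 2 then 1 else 0)"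
    "A$3$6 = 0" "A$4$6 = 0"
  shows "det A = - A$5$6 * (A$3$3*A$4$4*A$6$5 + A$3$4*A$4$5*A$6$3 + A$3$5*A$4$3*A$6$4
                            - A$3$3*A$4$5*A$6$4 - A$3$4*A$4$3*A$6$5 - A$3$5*A$4$4*A$6$3)
                 + A$6$6 * (A$3$3*A$4$4*A$5$5 + A$3$4*A$4$5*A$5$3 + A$3$5*A$4$3*A$5$4
                            - A$3$3*A$4$5*A$5$4 - A$3$4*A$4$3*A$5$5 - A$3$5*A$4$4*A$5$3)"
proof -
  have f1: "finite {2::6,3,4,5,6}" "1 \<notin> {2::6,3,4,5,6}" by auto
  have f2: "finite {3::6,4,5,6}" "2 \<notin> {3::6,4,5,6}" by auto
  have f3: "finite {4::6,5,6}" "3 \<notin> {4::6,5,6}" by auto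
  have f4: "finite {5::6,6}" "4 \<notin> {5::6,6}" by auto
  have f5: "finite {6::6}" "5 \<notin> {6::6}" by auto
  show ?thesis
    unfolding det_def UNIV_6
    unfolding sum_over_permutations_insert[OF f1]
    unfolding sum_over_permutations_insert[OF f2]
    unfolding sum_over_permutations_insert[OF f3]
    unfolding sum_over_permutations_insert[OF f4]
    unfolding sum_over_permutations_insert[OF f5]
    unfolding permutes_sing
    by (simp add: assms sign_swap_id permutation_swap_id sign_compose permutation_compose sign_id swap_id_eq algebra_simps)
qed

lemma R_alg: fixes tr kr p J dw a b d3 d4 w :: real
  assumes "tr \<noteq> 0" "kr \<noteq> 0"
  shows "(p/J)*(kr^2/tr^2)*(tr*dw*((a/kr)^2 + (b/kr)^2) - (1+tr^2*w^2)*(d3/kr*(b/kr) - d4/kr*(a/kr)))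
     = (p/J)*((1/tr)*dw*(a^2+b^2) - ((1/tr)^2 + w^2)*(d3*b - d4*a))"
proof -
  have "kr^2/tr^2*(tr*dw*((a/kr)^2 + (b/kr)^2) - (1+tr^2*w^2)*(d3/kr*(b/kr) - d4/kr*(a/kr)))
     = ((1/tr)*dw*(a^2+b^2) - ((1/tr)^2 + w^2)*(d3*b - d4*a))"
    using assms by (simp add: field_simps power2_eq_square)
  then show ?thesis by (metis mult.assoc)
qed

context fixes Rs Rr Ls Lr M p J :: real assumes trnz: "tau_r Rr Lr \<noteq> 0" and Jnz: "J \<noteq> 0" and krnz: "k_r Lr M \<noteq> 0" begin
abbreviation "FF \<equiv> im_field Rs Rr Ls Lr M p J"
abbreviation "aa \<equiv> a_im Rs Rr Ls Lr M"
abbreviation "bb \<equiv> b_im Rs Ls Lr M"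
abbreviation "cc \<equiv> c_im p Ls Lr M"
abbreviation "tr \<equiv> tau_r Rr Lr"
definition "gg = 1 / tau_r Rr Lr"
definition "qq = c_im p Ls Lr M / J"
definition "rr = p / J"

lemma FF1: "FF x V $ 1 = V$1 + aa * x$1 + gg * x$3 + x$5 * x$4"
  by (simp add: im_field_def Let_def gg_def qq_def rr_def)
lemma FF2: "FF x V $ 2 = V$2 + aa * x$2 + gg * x$4 - x$5 * x$3"
  by (simp add: im_field_def Let_def gg_def qq_def rr_def)
lemma FF3: "FF x V $ 3 = - (gg * x$3 + x$5 * x$4) - (aa - bb) * x$1"
  by (simp add: im_field_def Let_def gg_def qq_def rr_def)
lemma FF4: "FF x V $ 4 = - (gg * x$4 - x$5 * x$3) - (aa - bb) * x$2"
  by (simp add: im_field_def Let_def gg_def qq_def rr_def)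
lemma FF5: "FF x V $ 5 = qq * (x$1 * (- x$4) + x$2 * x$3) - rr * x$6"
  by (simp add: im_field_def Let_def gg_def qq_def rr_def)
lemma FF6: "FF x V $ 6 = 0"
  by (simp add: im_field_def Let_def gg_def qq_def rr_def)

lemma px: "((\<lambda>t. h (x + t *\<^sub>R axis j 1) u) has_real_derivative D) (at 0) \<Longrightarrow> partial_x h j x u = D"
  unfolding partial_x_def by (rule DERIV_imp_deriv)
lemma pu: "((\<lambda>t. h x (u(k := u k + t *\<^sub>R axis i 1))) has_real_derivative D) (at 0) \<Longrightarrow> partial_u h k i x u = D"
  unfolding partial_u_def by (rule DERIV_imp_deriv)

lemma px_out: "partial_x (out_im i) j x u = axis j 1 $ i"
  by (rule px) (auto simp: out_im_def intro!: derivative_eq_intros)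

lemma sum_axis: "(\<Sum>j\<in>UNIV. axis j (1::real) $ i * (v::real^'n) $ j) = v $ i"
proof -
  have "(\<Sum>j\<in>UNIV. axis j (1::real) $ i * v $ j) = (\<Sum>j\<in>UNIV. if i = j then v $ j else 0)"
    by (rule sum.cong) (auto simp: axis_def)
  then show ?thesis by simp
qed

lemma L1: "lie_iter F 1 (out_im i) = (\<lambda>x u. F x (u 0) $ i)"
  by (rule ext)+ (simp add: lie_step_def px_out sum_axis)

definition "dF1 (x::real^6) (e::real^6) = aa*e$1 + gg*e$3 + (e$5*x$4 + x$5*e$4)"
definition "dF2 (x::real^6) (e::real^6) = aa*e$2 + gg*e$4 - (e$5*x$3 + x$5*e$3)"
definition "dF3 (x::real^6) (e::real^6) = -(gg*e$3 + (e$5*x$4 + x$5*e$4)) - (aa-bb)*e$1"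
definition "dF4 (x::real^6) (e::real^6) = -(gg*e$4 - (e$5*x$3 + x$5*e$3)) - (aa-bb)*e$2"
definition "dF5 (x::real^6) (e::real^6) = qq*(e$1*(-x$4) + x$1*(-e$4) + (e$2*x$3 + x$2*e$3)) - rr*e$6"

lemma P1: "partial_x (\<lambda>x u. FF x (u 0) $ 1) j x u = dF1 x (axis j 1)"
  by (rule px) (auto simp: FF1 dF1_def trnz intro!: derivative_eq_intros)
lemma P2: "partial_x (\<lambda>x u. FF x (u 0) $ 2) j x u = dF2 x (axis j 1)"
  by (rule px) (auto simp: FF2 dF2_def trnz intro!: derivative_eq_intros)

lemma U1: "partial_u (\<lambda>x u. FF x (u 0) $ 1) 0 i x u = axis i 1 $ 1"
  by (rule pu) (auto simp: FF1 intro!: derivative_eq_intros)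
lemma U2: "partial_u (\<lambda>x u. FF x (u 0) $ 2) 0 i x u = axis i 1 $ 2"
  by (rule pu) (auto simp: FF2 intro!: derivative_eq_intros)

definition "G1 (x::real^6) (u::nat\<Rightarrow>real^2) = aa * FF x (u 0) $ 1 + gg * FF x (u 0) $ 3 + x$5 * FF x (u 0) $ 4 + x$4 * FF x (u 0) $ 5 + u 1 $ 1"
definition "G2 (x::real^6) (u::nat\<Rightarrow>real^2) = aa * FF x (u 0) $ 2 + gg * FF x (u 0) $ 4 - x$5 * FF x (u 0) $ 3 - x$3 * FF x (u 0) $ 5 + u 1 $ 2"


lemma sum_axis_c1: "(\<Sum>j\<in>UNIV. c * axis j (1::real) $ i * (v::real^'n) $ j) = c * v $ i"
proof -
  have "(\<Sum>j\<in>UNIV. c * axis j (1::real) $ i * (v::real^'n) $ j) = c * (\<Sum>j\<in>UNIV. axis j (1::real) $ i * v $ j)"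
    by (simp add: sum_distrib_left mult.assoc)
  then show ?thesis by (simp add: sum_axis)
qed
lemma sum_axis_d: "(\<Sum>j\<in>UNIV. axis j (1::real) $ i * (v::real^'n) $ j / c) = v $ i / c"
  by (simp add: sum_divide_distrib[symmetric] sum_axis)
lemma sum_axis_c2: "(\<Sum>j\<in>UNIV. axis j (1::real) $ i * c * (v::real^'n) $ j) = c * v $ i"
  using sum_axis_c1[of c i v] by (simp add: mult.commute mult.left_commute)

lemma S1: "(\<Sum>j\<in>UNIV. dF1 x (axis j 1) * v $ j) = dF1 x v"
  by (simp add: dF1_def ring_distribs sum.distrib sum_axis sum_axis_c1 sum_axis_c2 sum_axis_d)
lemma S2: "(\<Sum>j\<in>UNIV. dF2 x (axis j 1) * v $ j) = dF2 x v"
  by (simp add: dF2_def ring_distribs sum.distrib sum_subtractf sum_axis sum_axis_c1 sum_axis_c2 sum_axis_d)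

lemma L2a: "lie_iter FF 2 (out_im 1) = G1"
proof (rule ext)+
  fix x u
  have "lie_iter FF 2 (out_im 1) x u = lie_step FF 1 (\<lambda>x u. FF x (u 0) $ 1) x u"
    using L1 by (simp add: numeral_2_eq_2)
  also have "\<dots> = dF1 x (FF x (u 0)) + u 1 $ 1"
    by (simp add: lie_step_def P1 U1 S1 sum_axis)
  also have "\<dots> = G1 x u"
    by (simp add: dF1_def G1_def algebra_simps)
  finally show "lie_iter FF 2 (out_im 1) x u = G1 x u" .
qed
lemma L2b: "lie_iter FF 2 (out_im 2) = G2"
proof (rule ext)+
  fix x u
  have "lie_iter FF 2 (out_im 2) x u = lie_step FF 1 (\<lambda>x u. FF x (u 0) $ 2) x u"
    using L1 by (simp add: numeral_2_eq_2)
  also have "\<dots> = dF2 x (FF x (u 0)) + u 1 $ 2"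
    by (simp add: lie_step_def P2 U2 S2 sum_axis)
  also have "\<dots> = G2 x u"
    by (simp add: dF2_def G2_def algebra_simps)
  finally show "lie_iter FF 2 (out_im 2) x u = G2 x u" .
qed

definition "dG1 (x::real^6) (V::real^2) (e::real^6) = aa*dF1 x e + gg*dF3 x e + (e$5 * FF x V $ 4 + x$5 * dF4 x e) + (e$4 * FF x V $ 5 + x$4 * dF5 x e)"
definition "dG2 (x::real^6) (V::real^2) (e::real^6) = aa*dF2 x e + gg*dF4 x e - (e$5 * FF x V $ 3 + x$5 * dF3 x e) - (e$3 * FF x V $ 5 + x$3 * dF5 x e)"

lemma PG1: "partial_x G1 j x u = dG1 x (u 0) (axis j 1)"
  by (rule px) (auto simp: G1_def FF1 FF3 FF4 FF5 dG1_def dF1_def dF3_def dF4_def dF5_def trnz Jnz algebra_simps intro!: derivative_eq_intros)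
lemma PG2: "partial_x G2 j x u = dG2 x (u 0) (axis j 1)"
  by (rule px) (auto simp: G2_def FF2 FF3 FF4 FF5 dG2_def dF2_def dF3_def dF4_def dF5_def trnz Jnz algebra_simps intro!: derivative_eq_intros)
lemma Ob1: "obs_matrix FF x u $ 1 $ c = axis c 1 $ 1" by (simp add: obs_matrix_def px_out)
lemma Ob2: "obs_matrix FF x u $ 2 $ c = axis c 1 $ 2" by (simp add: obs_matrix_def px_out)
lemma Ob3: "obs_matrix FF x u $ 3 $ c = dF1 x (axis c 1)" by (simp add: obs_matrix_def L1[simplified] P1)
lemma Ob4: "obs_matrix FF x u $ 4 $ c = dF2 x (axis c 1)" by (simp add: obs_matrix_def L1[simplified] P2)
lemma Ob5: "obs_matrix FF x u $ 5 $ c = dG1 x (u 0) (axis c 1)" by (simp add: obs_matrix_def L2a PG1)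
lemma Ob6: "obs_matrix FF x u $ 6 $ c = dG2 x (u 0) (axis c 1)" by (simp add: obs_matrix_def L2b PG2)

lemma main_ctx: "det (obs_matrix FF x u) =
    (let tr = tau_r Rr Lr; kr = k_r Lr M;
         d = im_field Rs Rr Ls Lr M p J x (u 0);
         psa = x$3 / kr; psb = x$4 / kr; w = x$5;
         dpsa = d$3 / kr; dpsb = d$4 / kr; dw = d$5
     in (p / J) * (kr^2 / tr^2) *
        (tr * dw * (psa^2 + psb^2) - (1 + tr^2 * w^2) * (dpsa * psb - dpsb * psa)))" (is "_ = ?rhs")
proof -
  have R: "?rhs = rr * (gg * FF x (u 0) $ 5 * (x$3^2 + x$4^2) - (gg^2 + x$5^2) * (FF x (u 0) $ 3 * x$4 - FF x (u 0) $ 4 * x$3))"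
    unfolding Let_def gg_def rr_def by (rule R_alg[OF trnz krnz])
  show ?thesis
  unfolding R
  apply (subst det6_special)
      apply (auto simp: Ob1 Ob2 Ob3 Ob4 axis_def dF1_def dF2_def)[4]
  apply (simp add: Ob3 Ob4 Ob5 Ob6 dG1_def dG2_def dF1_def dF2_def dF3_def dF4_def dF5_def axis_def FF1 FF2 FF3 FF4 FF5)
  apply (simp add: algebra_simps power2_eq_square)
  done
qed
end
theorem mainTheorem7:
  fixes Rs Rr Ls Lr M p J :: real
    and x :: "real^6" and u :: "nat \<Rightarrow> real^2"
  assumes "p > 0" and "J > 0" and "tau_r Rr Lr > 0" and "k_r Lr M > 0"
  shows "det (obs_matrix (im_field Rs Rr Ls Lr M p J) x u) =
    (let tr = tau_r Rr Lr; kr = k_r Lr M;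
         d = im_field Rs Rr Ls Lr M p J x (u 0);
         psa = x$3 / kr; psb = x$4 / kr; w = x$5;
         dpsa = d$3 / kr; dpsb = d$4 / kr; dw = d$5
     in (p / J) * (kr^2 / tr^2) *
        (tr * dw * (psa^2 + psb^2) - (1 + tr^2 * w^2) * (dpsa * psb - dpsb * psa)))"
proof -
  have "tau_r Rr Lr \<noteq> 0" "J \<noteq> 0" "k_r Lr M \<noteq> 0" using assms by auto
  then show ?thesis by (rule main_ctx)
qed

end
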